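(* Fix $n\in\mathbb{Z}_+$ and $a_1,\ldots,a_{n+1}\in(0,\infty)$. Then there is a constant $c>0$ (depending on $a_1,\ldots,a_{n+1}$) and an unbounded open set $B$ of positive real numbers with the following property: for each $\beta\in B$ there are $p_1,\ldots,p_n\in\mathbb{Z}$ such that, for each $j\in\{1,\ldots,n\}$, \[0<p_j\frac{a_j}{a_{n+1}}-\beta<\begin{cases}c\beta^{-2}&\text{if }n=1,\\ c\beta^{-1/(n-1)}&\text{if }n\geq2.\end{cases}\] *)

theory Defs
  imports "HOL-Analysis.Analysis"
begin

end

theory Submission
  imports Defs
begin


lemma open_aux:
  fixes y :: "nat \<Rightarrow> real"
  assumes "finite J"
  shows "open {\<beta>::real. 0<\<beta> \<and> (\<forall>j\<in>J. 0 < y j - \<beta> \<and> y j - \<beta> < c * \<beta> powr e)}"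
proof -
  have cont: "continuous_on {0<..} (\<lambda>\<beta>::real. c * \<beta> powr e)"
    by (intro continuous_intros) auto
  have cont2: "continuous_on {0<..} (\<lambda>\<beta>::real. y j - \<beta>)" for j
    by (intro continuous_intros)
  have "\<forall>j. \<exists>A. open A \<and> A \<inter> {0<..} = {\<beta>\<in>{0<..}. y j - \<beta> < c*\<beta> powr e}"
    using open_Collect_less_Int[OF cont2 cont] by blast
  then obtain A where A: "\<And>j. open (A j)" "\<And>j. A j \<inter> {0<..} = {\<beta>\<in>{0<..}. y j - \<beta> < c*\<beta> powr e}"
    by metis
  have eq: "{\<beta>::real. 0<\<beta> \<and> (\<forall>j\<in>J. 0 < y j - \<beta> \<and> y j - \<beta> < c * \<beta> powr e)}
     = {0<..} \<inter> (\<Inter>j\<in>J. {..<y j} \<inter> A j)"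
  proof (intro set_eqI iffI)
    fix x assume "x \<in> {\<beta>::real. 0<\<beta> \<and> (\<forall>j\<in>J. 0 < y j - \<beta> \<and> y j - \<beta> < c * \<beta> powr e)}"
    then show "x \<in> {0<..} \<inter> (\<Inter>j\<in>J. {..<y j} \<inter> A j)"
      using A(2) by fastforce
  next
    fix x assume "x \<in> {0<..} \<inter> (\<Inter>j\<in>J. {..<y j} \<inter> A j)"
    then show "x \<in> {\<beta>::real. 0<\<beta> \<and> (\<forall>j\<in>J. 0 < y j - \<beta> \<and> y j - \<beta> < c * \<beta> powr e)}"
      using A(2) by fastforce
  qed
  show ?thesis unfolding eq using A(1) assms by (intro open_Int open_INT) auto
qed

lemma dirichlet:
  fixes \<theta> :: "'a \<Rightarrow> real" and N :: nat
  assumes "finite I" "N \<ge> 1"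
  shows "\<exists>q::nat. 1 \<le> q \<and> q \<le> N ^ card I \<and> (\<forall>i\<in>I. \<exists>p::int. \<bar>real q * \<theta> i - p\<bar> < 1 / N)"
proof -
  define g where "g k = restrict (\<lambda>i. nat \<lfloor>real N * frac (real k * \<theta> i)\<rfloor>) I" for k :: nat
  have gin: "g k \<in> PiE I (\<lambda>_. {..<N})" for k
  proof -
    have "nat \<lfloor>real N * frac (real k * \<theta> i)\<rfloor> < N" for i
    proof -
      have "real N * frac (real k * \<theta> i) < real N"
        using frac_lt_1 assms(2) by simp
      then have "\<lfloor>real N * frac (real k * \<theta> i)\<rfloor> < int N" by (simp add: floor_less_iff)
      then show ?thesis by (simp add: nat_less_iff frac_ge_0)
    qed
    then show ?thesis unfolding g_def by auto
  qed
  have "\<not> inj_on g {0..N^card I}"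
  proof
    assume "inj_on g {0..N^card I}"
    then have "card {0..N^card I} \<le> card (PiE I (\<lambda>_. {..<N}))"
      by (rule card_inj_on_le) (use gin assms in \<open>auto intro: finite_PiE\<close>)
    then show False by (simp add: card_PiE assms)
  qed
  then obtain k k' where kk: "k \<le> N^card I" "k' \<le> N^card I" "k \<noteq> k'" "g k = g k'"
    by (auto simp: inj_on_def)
  have "\<exists>k k'. k < k' \<and> k' \<le> N^card I \<and> g k = g k'"
    using kk by (metis linorder_neqE_nat)
  then obtain k k' where kk: "k < k'" "k' \<le> N^card I" "g k = g k'" by blast
  define q where "q = k' - k"
  have "\<exists>p::int. \<bar>real q * \<theta> i - p\<bar> < 1 / N" if i: "i \<in> I" for i
  proof -
    have "g k i = g k' i" using kk by simp
    then have fl: "\<lfloor>real N * frac (real k * \<theta> i)\<rfloor> = \<lfloor>real N * frac (real k' * \<theta> i)\<rfloor>"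
    proof -
      have "0 \<le> \<lfloor>real N * frac (real k * \<theta> i)\<rfloor>" "0 \<le> \<lfloor>real N * frac (real k' * \<theta> i)\<rfloor>"
        by (simp_all add: frac_ge_0)
      moreover have "nat \<lfloor>real N * frac (real k * \<theta> i)\<rfloor> = nat \<lfloor>real N * frac (real k' * \<theta> i)\<rfloor>"
        using i \<open>g k i = g k' i\<close> unfolding g_def by simp
      ultimately show ?thesis by linarith
    qed
    have "\<bar>real N * frac (real k' * \<theta> i) - real N * frac (real k * \<theta> i)\<bar> < 1"
      using fl by linarith
    then have "\<bar>frac (real k' * \<theta> i) - frac (real k * \<theta> i)\<bar> < 1 / N"
    proof -
      have "real N * \<bar>frac (real k' * \<theta> i) - frac (real k * \<theta> i)\<bar> < 1"
        using \<open>\<bar>real N * frac (real k' * \<theta> i) - real N * frac (real k * \<theta> i)\<bar> < 1\<close>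
        by (simp add: abs_mult right_diff_distrib[symmetric])
      then show ?thesis using assms(2) by (simp add: field_simps)
    qed
    moreover have "real q * \<theta> i = real k' * \<theta> i - real k * \<theta> i"
      using kk by (simp add: q_def of_nat_diff left_diff_distrib)
    ultimately have "\<bar>real q * \<theta> i - of_int (\<lfloor>real k' * \<theta> i\<rfloor> - \<lfloor>real k * \<theta> i\<rfloor>)\<bar> < 1 / N"
      by (simp add: frac_def)
    then show ?thesis by blast
  qed
  moreover have "1 \<le> q" "q \<le> N ^ card I" using kk by (auto simp: q_def)
  ultimately show ?thesis by blast
qed


lemma dist_int_bound:
  fixes x :: real and p :: int
  shows "min (frac x) (1 - frac x) \<le> \<bar>x - p\<bar>"
proof (cases "p \<le> \<lfloor>x\<rfloor>")
  case True
  then have "real_of_int p \<le> of_int \<lfloor>x\<rfloor>" by simp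
  then show ?thesis unfolding frac_def by linarith
next
  case False
  then have "real_of_int p \<ge> of_int \<lfloor>x\<rfloor> + 1" by simp
  then show ?thesis unfolding frac_def by linarith
qed


lemma dirichlet_inf:
  fixes \<theta> :: "'a \<Rightarrow> real" and M :: nat
  assumes "finite I" "I \<noteq> {}"
  shows "\<exists>q::nat. q > M \<and> (\<forall>i\<in>I. \<exists>p::int. \<bar>real q * \<theta> i - p\<bar> \<le> real q powr (-1 / real (card I)))"
proof (cases "\<exists>q0::nat. q0 \<ge> 1 \<and> (\<forall>i\<in>I. \<exists>p::int. real q0 * \<theta> i = p)")
  case True
  then obtain q0 :: nat where q0: "q0 \<ge> 1" "\<forall>i\<in>I. \<exists>p::int. real q0 * \<theta> i = p" by blast
  have "q0 * (M+1) > M" 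
  proof -
    have "1 * (M+1) \<le> q0 * (M+1)" using q0(1) by (intro mult_le_mono1)
    then show ?thesis by simp
  qed
  moreover have "\<exists>p::int. \<bar>real (q0 * (M+1)) * \<theta> i - p\<bar> \<le> real (q0 * (M+1)) powr (-1 / real (card I))"
    if iI: "i \<in> I" for i
  proof -
    obtain p :: int where p: "real q0 * \<theta> i = p" using q0(2) iI by blast
    have "real (q0 * (M+1)) * \<theta> i = (real q0 * \<theta> i) * real (M+1)"
      by (simp only: of_nat_mult) (simp only: mult.assoc mult.commute mult.left_commute)
    also have "\<dots> = of_int (p * int (M+1))" using p by simp
    finally have "real (q0 * (M+1)) * \<theta> i = of_int (p * int (M+1))" .
    then show ?thesis by (intro exI[of _ "p * int (M+1)"]) simp
  qed
  ultimately show ?thesis by blast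
next
  case False
  define d where "d x = min (frac x) (1 - frac x)" for x :: real
  define S where "S = (\<lambda>(q,i). d (real q * \<theta> i)) ` ({1..M} \<times> I)"
  define \<eta> where "\<eta> = Min (insert 1 (S \<inter> {0<..}))"
  have finS: "finite S" unfolding S_def using assms by auto
  have etapos: "\<eta> > 0" unfolding \<eta>_def using finS by (subst Min_gr_iff) auto
  have etale: "\<eta> \<le> d (real q * \<theta> i)" if "q \<in> {1..M}" "i \<in> I" "d (real q * \<theta> i) > 0" for q i
  proof -
    have "d (real q * \<theta> i) \<in> S" unfolding S_def using that by (intro image_eqI[where x="(q,i)"]) auto
    then show ?thesis unfolding \<eta>_def using finS that by (intro Min_le) auto
  qed
  have dpos: "\<exists>i\<in>I. d (real q * \<theta> i) > 0" if q1: "q \<ge> 1" for q :: nat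
  proof -
    obtain i where i: "i \<in> I" "\<forall>p::int. real q * \<theta> i \<noteq> p" using False q1 by blast
    have "frac (real q * \<theta> i) \<noteq> 0"
      using i(2) by (auto simp: frac_eq_0_iff elim!: Ints_cases)
    then have "frac (real q * \<theta> i) > 0" using frac_ge_0 by (metis less_eq_real_def)
    moreover have "frac (real q * \<theta> i) < 1" by (rule frac_lt_1)
    ultimately show ?thesis using i(1) unfolding d_def by auto
  qed
  define N :: nat where "N = nat \<lceil>1 / \<eta>\<rceil> + 1"
  have N1: "N \<ge> 1" unfolding N_def by simp
  have "real N > 1 / \<eta>" unfolding N_def by linarith
  then have invN: "1 / real N < \<eta>" using etapos N1
    by (simp add: field_simps)
  obtain q :: nat where q: "1 \<le> q" "q \<le> N ^ card I" "\<forall>i\<in>I. \<exists>p::int. \<bar>real q * \<theta> i - p\<bar> < 1 / N"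
    using dirichlet[OF assms(1) N1, of \<theta>] by blast
  have "q > M"
  proof (rule ccontr)
    assume "\<not> q > M"
    then have qM: "q \<in> {1..M}" using q by auto
    obtain i where i: "i \<in> I" "d (real q * \<theta> i) > 0" using dpos q by blast
    obtain p :: int where p: "\<bar>real q * \<theta> i - p\<bar> < 1 / N" using q i by blast
    have "d (real q * \<theta> i) \<le> \<bar>real q * \<theta> i - p\<bar>" unfolding d_def by (rule dist_int_bound)
    then show False using etale[OF qM i] p invN by linarith
  qed
  moreover have le1: "1 / real N \<le> real q powr (-1 / real (card I))"
  proof -
    have cI: "card I > 0" using assms by (simp add: card_gt_0_iff)
    have "real q \<le> real N ^ card I" using q(2) by (metis of_nat_le_iff of_nat_power)
    then have "real q powr (1 / real (card I)) \<le> (real N ^ card I) powr (1 / real (card I))"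
      by (intro powr_mono2) auto
    also have "\<dots> = real N"
      using cI N1 by (simp add: powr_realpow[symmetric] powr_powr)
    finally have le: "real q powr (1 / real (card I)) \<le> real N" .
    have "real q powr (-1 / real (card I)) = 1 / real q powr (1 / real (card I))"
      by (simp add: powr_minus_divide[symmetric])
    moreover have "real q powr (1 / real (card I)) > 0" using q(1) by simp
    ultimately show ?thesis using le by (simp add: frac_le)
  qed
  moreover have "\<forall>i\<in>I. \<exists>p::int. \<bar>real q * \<theta> i - p\<bar> \<le> real q powr (-1 / real (card I))"
  proof
    fix i assume "i \<in> I"
    then obtain p :: int where "\<bar>real q * \<theta> i - p\<bar> < 1 / N" using q(3) by blast
    then show "\<exists>p::int. \<bar>real q * \<theta> i - p\<bar> \<le> real q powr (-1 / real (card I))"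
      using le1 by (intro exI[of _ p]) linarith
  qed
  ultimately show ?thesis by blast
qed



theorem lemma5p5:
  fixes n :: nat and a :: "nat \<Rightarrow> real"
  assumes "n \<ge> 1"
    and "\<And>j. j \<in> {1..n+1} \<Longrightarrow> a j > 0"
  shows "\<exists>c > 0. \<exists>B :: real set. open B \<and> B \<subseteq> {0<..} \<and> \<not> bdd_above B \<and>
    (\<forall>\<beta>\<in>B. \<exists>p :: nat \<Rightarrow> int. \<forall>j\<in>{1..n}.
       0 < of_int (p j) * (a j / a (n+1)) - \<beta> \<and>
       of_int (p j) * (a j / a (n+1)) - \<beta> <
         (if n = 1 then c * \<beta> powr (-2) else c * \<beta> powr (- 1 / (real n - 1))))"
proof -
  define b where "b j = a j / a (n+1)" for j
  have bpos: "b j > 0" if "j \<in> {1..n}" for j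
    using assms(2)[of j] assms(2)[of "n+1"] that unfolding b_def by auto
  define e :: real where "e = (if n = 1 then -2 else -1/(real n - 1))"
  have ifeq: "(if n = 1 then c * \<beta> powr (-2) else c * \<beta> powr (- 1 / (real n - 1))) = c * \<beta> powr e"
    for c \<beta> :: real unfolding e_def by simp
  define Bs where "Bs c = (\<Union>p::nat\<Rightarrow>int. {\<beta>::real. 0<\<beta> \<and> (\<forall>j\<in>{1..n}.
      0 < of_int (p j) * b j - \<beta> \<and> of_int (p j) * b j - \<beta> < c * \<beta> powr e)})" for c
  have key: "\<exists>c>0. \<forall>M\<ge>0. \<exists>\<beta>\<in>Bs c. \<beta> > M"
  proof (cases "n = 1")
    case True
    have b1: "b 1 > 0" using bpos assms(1) by auto
    have "\<forall>M\<ge>0. \<exists>\<beta>\<in>Bs 1. \<beta> > M"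
    proof (intro allI impI)
      fix M :: real assume M0: "M \<ge> 0"
      define p where "p = \<lceil>(M+1) / b 1\<rceil>"
      define t where "t = of_int p * b 1"
      have "of_int p \<ge> (M+1) / b 1" unfolding p_def by linarith
      then have tM: "t \<ge> M + 1" unfolding t_def using b1 by (simp add: field_simps)
      have tpos: "t > 0" using tM M0 by linarith
      define \<epsilon> where "\<epsilon> = min (1/2) (t powr -2 / 2)"
      have tp: "t powr -2 > 0" using tpos by simp
      have e1: "\<epsilon> \<le> t powr -2 / 2" "\<epsilon> \<le> 1/2" "\<epsilon> > 0" using tp unfolding \<epsilon>_def by auto
      have eps: "\<epsilon> > 0" "\<epsilon> \<le> 1/2" "\<epsilon> < t powr -2" using e1 tp by linarith+
      define \<beta> where "\<beta> = t - \<epsilon>"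
      have bM: "\<beta> > M" "\<beta> > 0" "\<beta> \<le> t" using eps tM M0 unfolding \<beta>_def by auto
      have "t powr -2 \<le> \<beta> powr -2" using bM by (intro powr_mono2') auto
      then have "\<beta> \<in> Bs 1" unfolding Bs_def using True eps bM
        by (intro UN_I[of "\<lambda>_. p"]) (auto simp: e_def \<beta>_def t_def)
      then show "\<exists>\<beta>\<in>Bs 1. \<beta> > M" using bM by blast
    qed
    then show ?thesis by (intro exI[of _ 1]) auto
  next
    case False
    then have n2: "n \<ge> 2" using assms(1) by auto
    define I where "I = {2..n}"
    have cardI: "card I = n - 1" "real (card I) = real n - 1" using n2 unfolding I_def by auto
    have Ine: "finite I" "I \<noteq> {}" using n2 unfolding I_def by auto
    have e_eq: "e = -1 / real (card I)" using False cardI unfolding e_def by simp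
    define \<theta> where "\<theta> i = b 1 / b i" for i
    define Bm where "Bm = (\<Sum>j\<in>{1..n}. b j)"
    have bleB: "b j \<le> Bm" if "j \<in> {1..n}" for j
      unfolding Bm_def using that bpos by (intro member_le_sum) (auto simp: less_imp_le)
    have b1: "b 1 > 0" using bpos assms(1) by auto
    have Bmpos: "Bm > 0" using bleB[of 1] b1 assms(1) by auto
    define c where "c = 4 * Bm * b 1 powr (1 / real (card I))"
    have cpos: "c > 0" unfolding c_def using Bmpos b1 by simp
    have "\<forall>M\<ge>0. \<exists>\<beta>\<in>Bs c. \<beta> > M"
    proof (intro allI impI)
      fix M :: real assume M0: "M \<ge> 0"
      define M' where "M' = nat \<lceil>(M + 2*Bm) / b 1\<rceil>"
      obtain q :: nat where q: "q > M'"
        "\<forall>i\<in>I. \<exists>p::int. \<bar>real q * \<theta> i - p\<bar> \<le> real q powr (-1 / real (card I))"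
        using dirichlet_inf[OF Ine, of M' \<theta>] by blast
      obtain pp :: "nat \<Rightarrow> int" where pp: "\<forall>i\<in>I. \<bar>real q * \<theta> i - pp i\<bar> \<le> real q powr e"
        using q(2) unfolding e_eq by metis
      define P where "P j = (if j = 1 then int q else pp j)" for j
      define D where "D = Bm * real q powr e"
      have "real q \<ge> real M' + 1" using q(1) by simp
      moreover have "real M' \<ge> (M + 2*Bm) / b 1" unfolding M'_def by linarith
      ultimately have "real q \<ge> (M + 2*Bm) / b 1 + 1" by linarith
      then have qb: "real q * b 1 > M + 2 * Bm" using b1 by (simp add: field_simps)
      have q1: "real q \<ge> 1" using q(1) by simp
      have e0: "e \<le> 0" unfolding e_eq by simp
      have "real q powr e \<le> 1 powr e" using q1 e0 by (intro powr_mono2') auto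
      then have qe1: "real q powr e \<le> 1" by simp
      have qe0: "real q powr e > 0" using q1 by simp
      have D0: "D > 0" "D \<le> Bm" unfolding D_def using Bmpos qe0 qe1 by (auto simp: mult_le_cancel_left1)
      define \<beta> where "\<beta> = real q * b 1 - 2 * D"
      have bM: "\<beta> > M" "\<beta> > 0" "\<beta> \<le> real q * b 1" using qb D0 M0 unfolding \<beta>_def by auto
      have close: "\<bar>of_int (P j) * b j - real q * b 1\<bar> \<le> D" if j: "j \<in> {1..n}" for j
      proof (cases "j = 1")
        case True
        then show ?thesis using D0 by (simp add: P_def)
      next
        case False
        then have jI: "j \<in> I" using j unfolding I_def by auto
        have bj: "b j > 0" using bpos j by simp
        have "of_int (P j) * b j - real q * b 1 = b j * (of_int (pp j) - real q * \<theta> j)"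
          using False bj by (simp add: P_def \<theta>_def field_simps)
        then have "\<bar>of_int (P j) * b j - real q * b 1\<bar> = b j * \<bar>real q * \<theta> j - of_int (pp j)\<bar>"
          using bj by (simp add: abs_mult abs_minus_commute)
        also have "\<dots> \<le> b j * real q powr e" using pp jI bj by (intro mult_left_mono) auto
        also have "\<dots> \<le> Bm * real q powr e" using bleB[OF j] qe0 by (intro mult_right_mono) auto
        finally show ?thesis unfolding D_def .
      qed
      have "(real q * b 1) powr e \<le> \<beta> powr e" using bM e0 by (intro powr_mono2') auto
      moreover have "(real q * b 1) powr e = real q powr e * b 1 powr e" using b1 by (simp add: powr_mult)
      moreover have "b 1 powr (1 / real (card I)) * b 1 powr e = 1"
        using b1 unfolding e_eq by (simp add: powr_add[symmetric])
      ultimately have "4 * D \<le> c * \<beta> powr e"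
      proof -
        assume A: "(real q * b 1) powr e \<le> \<beta> powr e" "(real q * b 1) powr e = real q powr e * b 1 powr e"
          "b 1 powr (1 / real (card I)) * b 1 powr e = 1"
        have "4 * D = 4 * Bm * (b 1 powr (1 / real (card I)) * b 1 powr e) * real q powr e"
          using A(3) unfolding D_def by simp
        also have "\<dots> = c * (real q * b 1) powr e" unfolding c_def A(2) by (simp add: ac_simps)
        also have "\<dots> \<le> c * \<beta> powr e" using A(1) cpos by (intro mult_left_mono) auto
        finally show ?thesis .
      qed
      then have "\<forall>j\<in>{1..n}. 0 < of_int (P j) * b j - \<beta> \<and> of_int (P j) * b j - \<beta> < c * \<beta> powr e"
      proof (intro ballI)
        fix j assume j: "j \<in> {1..n}"
        assume fourD: "4 * D \<le> c * \<beta> powr e"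
        have "\<bar>of_int (P j) * b j - real q * b 1\<bar> \<le> D" by (rule close[OF j])
        then show "0 < of_int (P j) * b j - \<beta> \<and> of_int (P j) * b j - \<beta> < c * \<beta> powr e"
          using D0 fourD unfolding \<beta>_def by (auto simp: abs_le_iff)
      qed
      then have "\<beta> \<in> Bs c" unfolding Bs_def using bM by (intro UN_I[of P]) auto
      then show "\<exists>\<beta>\<in>Bs c. \<beta> > M" using bM by blast
    qed
    then show ?thesis using cpos by blast
  qed
  then obtain c where c: "c > 0" "\<forall>M\<ge>0. \<exists>\<beta>\<in>Bs c. \<beta> > M" by blast
  have opn: "open (Bs c)" unfolding Bs_def
  proof (intro open_UN ballI)
    fix p :: "nat \<Rightarrow> int"
    show "open {\<beta>::real. 0<\<beta> \<and> (\<forall>j\<in>{1..n}.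
      0 < of_int (p j) * b j - \<beta> \<and> of_int (p j) * b j - \<beta> < c * \<beta> powr e)}"
      using open_aux[of "{1..n}" "\<lambda>j. of_int (p j) * b j" c e] by simp
  qed
  have sub: "Bs c \<subseteq> {0<..}" unfolding Bs_def by auto
  have nbdd: "\<not> bdd_above (Bs c)"
  proof
    assume "bdd_above (Bs c)"
    then obtain M where M: "\<forall>x\<in>Bs c. x \<le> M" unfolding bdd_above_def by blast
    obtain \<beta> where "\<beta> \<in> Bs c" "\<beta> > max M 0" using c(2) by (meson max.cobounded2)
    then show False using M by fastforce
  qed
  have prp: "\<forall>\<beta>\<in>Bs c. \<exists>p :: nat \<Rightarrow> int. \<forall>j\<in>{1..n}.
       0 < of_int (p j) * (a j / a (n+1)) - \<beta> \<and>
       of_int (p j) * (a j / a (n+1)) - \<beta> <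
         (if n = 1 then c * \<beta> powr (-2) else c * \<beta> powr (- 1 / (real n - 1)))"
  proof
    fix \<beta> assume "\<beta> \<in> Bs c"
    then obtain p :: "nat \<Rightarrow> int" where "\<forall>j\<in>{1..n}.
      0 < of_int (p j) * b j - \<beta> \<and> of_int (p j) * b j - \<beta> < c * \<beta> powr e"
      unfolding Bs_def by blast
    then show "\<exists>p :: nat \<Rightarrow> int. \<forall>j\<in>{1..n}.
       0 < of_int (p j) * (a j / a (n+1)) - \<beta> \<and>
       of_int (p j) * (a j / a (n+1)) - \<beta> <
         (if n = 1 then c * \<beta> powr (-2) else c * \<beta> powr (- 1 / (real n - 1)))"
      unfolding ifeq b_def by blast
  qed
  show ?thesis
    apply (rule exI[of _ c], rule conjI[OF c(1)])
    apply (rule exI[of _ "Bs c"])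
    using opn sub nbdd prp by (intro conjI)
qed


end
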